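(* In the setting of the context, let $\{\tilde x_i^k\}_{k\ge0}\subset\mathbb{R}^d$ ($i\in[m]$) be arbitrary. Let $\alpha^k\in(0,1)$ satisfy $(\alpha^{k+1})^2=(1-\alpha^{k+1})(\alpha^k)^2+\alpha^{k+1}\mu_M/\delta$ for all $k\ge0$, and let $\zeta^0:=\frac{\delta(\alpha^0)^2-\alpha^0\mu_M}{1-\alpha^0}>0$ (so that $\zeta^{k+1}=\delta(\alpha^k)^2$ for all $k$). Let $\psi_i^k$, $\zeta^k$, $v_i^k$, $\psi_i^{k,\star}$ be as in the canonical-form recursion with (i) $\psi_i^{0,\star}=M(\tilde x_i^0)$ and $v_i^0=\tilde x_i^0$; (ii) $\tilde z_i^0=\tilde x_i^0$ and $\tilde z_i^{k+1}=\tilde x_i^{k+1}+\frac{\alpha^k(1-\alpha^k)}{(\alpha^k)^2+\alpha^{k+1}}(\tilde x_i^{k+1}-\tilde x_i^k)$; (iii) $e_i^k:=\delta(\tilde z_i^k-\tilde x_i^{k+1})-\nabla M(\tilde z_i^k)$. Define $\epsilon_{\psi,i}^0:=0$ and $$\epsilon_{\psi,i}^{k+1}:=(1-\alpha^k)\epsilon_{\psi,i}^k+(1-\alpha^k)\langle e_i^k,\tilde x_i^k-\tilde z_i^k\rangle+\Big\langle e_i^k+\nabla M(\tilde z_i^k),\frac1\delta e_i^k\Big\rangle.$$ Then for all $k\ge0$ and $i\in[m]$, $M(\tilde x_i^k)\le\psi_i^{k,\star}+\epsilon_{\psi,i}^k$.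
   Context: $u=f+r$ on $\mathbb{R}^d$, $f=\frac1m\sum_if_i$ with $f_i$ continuously differentiable convex, $f$ $\mu$-strongly convex ($\mu\ge0$) and $L$-smooth, $r$ proper closed convex. Fix $\delta>0$. $M(x):=\min_y\{u(y)+\frac\delta2\|y-x\|^2\}$ (Moreau envelope; differentiable, convex, $\delta$-smooth), $\mu_M:=\delta\mu/(\delta+\mu)$. Canonical-form recursion: $\psi_i^0(x)=\psi_i^{0,\star}+\frac{\zeta^0}2\|x-v_i^0\|^2$ and $\psi_i^{k+1}(x)=(1-\alpha^k)\psi_i^k(x)+\alpha^k\big(M(\tilde z_i^k)+\langle\nabla M(\tilde z_i^k)+e_i^k,x-\tilde z_i^k\rangle+\frac{\mu_M}2\|x-\tilde z_i^k\|^2\big)$; then $\psi_i^k(x)=\psi_i^{k,\star}+\frac{\zeta^k}2\|x-v_i^k\|^2$ with $\zeta^{k+1}=(1-\alpha^k)\zeta^k+\alpha^k\mu_M$, $v_i^{k+1}=\frac{(1-\alpha^k)\zeta^k}{\zeta^{k+1}}v_i^k+\frac{\alpha^k\mu_M}{\zeta^{k+1}}\tilde z_i^k-\frac{\alpha^k}{\zeta^{k+1}}(\nabla M(\tilde z_i^k)+e_i^k)$, and $\psi_i^{k+1,\star}=(1-\alpha^k)\psi_i^{k,\star}+\alpha^kM(\tilde z_i^k)-\frac{(\alpha^k)^2}{2\zeta^{k+1}}\|\nabla M(\tilde z_i^k)+e_i^k\|^2+\frac{\alpha^k(1-\alpha^k)\zeta^k}{\zeta^{k+1}}\big(\langle\nabla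 M(\tilde z_i^k)+e_i^k,v_i^k-\tilde z_i^k\rangle+\frac{\mu_M}2\|\tilde z_i^k-v_i^k\|^2\big)$, where $\psi_i^{k,\star}=\min_x\psi_i^k(x)$. *)

theory Defs
  imports "HOL-Analysis.Analysis"
begin

definition grad :: "('a::euclidean_space \<Rightarrow> real) \<Rightarrow> 'a \<Rightarrow> 'a" where
  "grad F x = (SOME g. GDERIV F x :> g)"

definition strongly_convex :: "real \<Rightarrow> ('a::euclidean_space \<Rightarrow> real) \<Rightarrow> bool" where
  "strongly_convex \<mu> F \<longleftrightarrow>
     (\<forall>x y t. 0 \<le> t \<and> t \<le> 1 \<longrightarrow>
        F ((1 - t) *\<^sub>R x + t *\<^sub>R y) \<le> (1 - t) * F x + t * F y - \<mu> / 2 * t * (1 - t) * (norm (x - y))\<^sup>2)"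

definition L_smooth :: "real \<Rightarrow> ('a::euclidean_space \<Rightarrow> real) \<Rightarrow> bool" where
  "L_smooth L F \<longleftrightarrow> (\<forall>x. F differentiable (at x)) \<and>
     (\<forall>x y. norm (grad F x - grad F y) \<le> L * norm (x - y))"

definition C1 :: "('a::euclidean_space \<Rightarrow> real) \<Rightarrow> bool" where
  "C1 F \<longleftrightarrow> (\<forall>x. F differentiable (at x)) \<and> continuous_on UNIV (grad F)"

definition epi :: "('a \<Rightarrow> ereal) \<Rightarrow> ('a \<times> real) set" where
  "epi r = {(x, t). r x \<le> ereal t}"

definition proper_closed_convex :: "('a::euclidean_space \<Rightarrow> ereal) \<Rightarrow> bool" where
  "proper_closed_convex r \<longleftrightarrow>
     (\<forall>x. r x \<noteq> -\<infinity>) \<and> (\<exists>x. r x \<noteq> \<infinity>) \<and> convex (epi r) \<and> closed (epi r)"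

definition moreau :: "('a::euclidean_space \<Rightarrow> ereal) \<Rightarrow> real \<Rightarrow> 'a \<Rightarrow> real" where
  "moreau u \<delta> x = real_of_ereal (INF y. u y + ereal (\<delta> / 2 * (norm (y - x))\<^sup>2))"

end

theory Submission
  imports Defs
begin


lemma pcc_minor:
  fixes u :: "'a::euclidean_space \<Rightarrow> ereal"
  assumes "proper_closed_convex u"
  shows "\<exists>a b. \<forall>y. ereal (inner a y + b) \<le> u y"
proof -
  from assms obtain x0 where x0: "u x0 \<noteq> \<infinity>" and nm: "\<And>x. u x \<noteq> -\<infinity>"
    and cv: "convex (epi u)" and cl: "closed (epi u)"
    unfolding proper_closed_convex_def by blast
  obtain t0 where t0: "u x0 = ereal t0" using x0 nm[of x0] by (cases "u x0") auto
  have "(x0, t0 - 1) \<notin> epi u" using t0 by (simp add: epi_def)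
  from separating_hyperplane_closed_point[OF cv cl this]
  obtain A b where Ab: "inner A (x0, t0 - 1) < b" "\<forall>p\<in>epi u. inner A p > b" by blast
  obtain a1 \<beta> where A: "A = (a1, \<beta>)" by (cases A)
  have mem: "(y, t) \<in> epi u \<longleftrightarrow> u y \<le> ereal t" for y t by (simp add: epi_def)
  have h0: "inner a1 x0 + \<beta> * t0 > b" using Ab(2) mem[of x0 t0] t0 A by auto
  have h1: "inner a1 x0 + \<beta> * (t0 - 1) < b" using Ab(1) A by simp
  have bpos: "\<beta> > 0" using h0 h1 by (simp add: algebra_simps)
  have "ereal (inner (- (1/\<beta>) *\<^sub>R a1) y + b / \<beta>) \<le> u y" for y
  proof (cases "u y")
    case (real s)
    then have "inner a1 y + \<beta> * s > b" using Ab(2) mem[of y s] A by auto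
    then have "b / \<beta> - inner a1 y / \<beta> < s" using bpos by (simp add: field_simps)
    then show ?thesis using real by (simp add: inner_scaleR_left)
  next
    case PInf then show ?thesis by simp
  next
    case MInf then show ?thesis using nm by simp
  qed
  then show ?thesis by blast
qed

lemma pcc_conv:
  fixes u :: "'a::euclidean_space \<Rightarrow> ereal"
  assumes "proper_closed_convex u" "u y1 \<le> ereal t1" "u y2 \<le> ereal t2" "0 \<le> s" "s \<le> 1"
  shows "u ((1 - s) *\<^sub>R y1 + s *\<^sub>R y2) \<le> ereal ((1 - s) * t1 + s * t2)"
proof -
  have cv: "convex (epi u)" using assms(1) unfolding proper_closed_convex_def by blast
  have "(y1, t1) \<in> epi u" "(y2, t2) \<in> epi u" using assms(2,3) by (auto simp: epi_def)
  then have "(1 - s) *\<^sub>R (y1, t1) + s *\<^sub>R (y2, t2) \<in> epi u"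
    using cv assms(4,5) unfolding convex_alt by blast
  then show ?thesis by (simp add: epi_def)
qed

lemma pcc_closed:
  fixes u :: "'a::euclidean_space \<Rightarrow> ereal"
  assumes "proper_closed_convex u" "\<And>n. u (y n) \<le> ereal (t n)" "y \<longlonglongrightarrow> y0" "t \<longlonglongrightarrow> t0"
  shows "u y0 \<le> ereal t0"
proof -
  have cl: "closed (epi u)" using assms(1) unfolding proper_closed_convex_def by blast
  have A: "(\<lambda>n. (y n, t n)) \<longlonglongrightarrow> (y0, t0)" using assms(3,4) by (rule tendsto_Pair)
  have B: "\<forall>n. (y n, t n) \<in> epi u" using assms(2) by (simp add: epi_def)
  have X: "\<forall>x l. (\<forall>n. x n \<in> epi u) \<and> x \<longlonglongrightarrow> l \<longrightarrow> l \<in> epi u"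
    using cl by (simp add: closed_sequential_limits)
  have "(y0, t0) \<in> epi u" using X[rule_format, OF conjI[OF B A]] .
  then show ?thesis by (simp add: epi_def)
qed

lemma norm_mid:
  fixes p q x :: "'a::real_inner"
  shows "(norm ((1/2) *\<^sub>R p + (1/2) *\<^sub>R q - x))\<^sup>2
     = ((norm (p - x))\<^sup>2 + (norm (q - x))\<^sup>2) / 2 - (norm (p - q))\<^sup>2 / 4"
  unfolding power2_norm_eq_inner
  by (simp add: inner_add_left inner_add_right inner_diff_left inner_diff_right inner_scaleR_left inner_scaleR_right inner_commute[of q p] inner_commute[of x p] inner_commute[of x q] field_simps)

lemma norm_conv_eq:
  fixes p q :: "'a::real_inner"
  shows "(1 - t) * (norm p)\<^sup>2 + t * (norm q)\<^sup>2 - (norm ((1 - t) *\<^sub>R p + t *\<^sub>R q))\<^sup>2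
      = t * (1 - t) * (norm (p - q))\<^sup>2"
  unfolding power2_norm_eq_inner
  by (simp add: inner_add_left inner_add_right inner_diff_left inner_diff_right inner_scaleR_left inner_scaleR_right inner_commute[of q p] field_simps)

lemma norm_conv:
  fixes p q :: "'a::real_inner"
  assumes "0 \<le> t" "t \<le> 1"
  shows "(norm ((1 - t) *\<^sub>R p + t *\<^sub>R q))\<^sup>2 \<le> (1 - t) * (norm p)\<^sup>2 + t * (norm q)\<^sup>2"
proof -
  have "0 \<le> t * (1 - t) * (norm (p - q))\<^sup>2" using assms by simp
  then show ?thesis using norm_conv_eq[of t p q] by linarith
qed



lemma arith_aux: "(I::real) \<le> A \<Longrightarrow> A \<le> (P+Q)/2 - T \<Longrightarrow> P < I + a \<Longrightarrow> Q < I + b \<Longrightarrow> T \<le> (a+b)/2"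
  by argo

lemma pcc_prox:
  fixes u :: "'a::euclidean_space \<Rightarrow> ereal" and x :: 'a
  assumes pcc: "proper_closed_convex u" and dpos: "\<delta> > 0"
  shows "\<exists>y. u y \<noteq> \<infinity> \<and> (\<forall>w. u y + ereal (\<delta>/2 * (norm (y - x))\<^sup>2) \<le> u w + ereal (\<delta>/2 * (norm (w - x))\<^sup>2))"
proof -
  obtain a b where ab: "\<And>y. ereal (inner a y + b) \<le> u y" using pcc_minor[OF pcc] by blast
  from pcc obtain x0 where x0: "u x0 \<noteq> \<infinity>" and nm: "\<And>x. u x \<noteq> -\<infinity>"
    unfolding proper_closed_convex_def by blast
  define ur where "ur y = real_of_ereal (u y)" for y
  define D where "D = {y. u y \<noteq> \<infinity>}"
  have uD: "u y = ereal (ur y)" if "y \<in> D" for y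
    using that nm[of y] unfolding D_def ur_def by (cases "u y") auto
  define \<phi> where "\<phi> y = ur y + \<delta>/2 * (norm (y - x))\<^sup>2" for y
  define c where "c = inner a x + b - (norm a)\<^sup>2 / (2 * \<delta>)"
  have lb: "c \<le> \<phi> y" if "y \<in> D" for y
  proof -
    have "inner a y + b \<le> ur y" using ab[of y] uD[OF that] by simp
    moreover have "inner a y = inner a (y - x) + inner a x" by (simp add: inner_diff_right)
    moreover have "- inner a (y - x) \<le> norm a * norm (y - x)"
      using norm_cauchy_schwarz[of "-a" "y - x"] by simp
    moreover have "0 \<le> (\<delta> * norm (y - x) - norm a)\<^sup>2 / (2 * \<delta>)" using dpos by simp
    moreover have "(\<delta> * norm (y - x) - norm a)\<^sup>2 / (2 * \<delta>)
        = \<delta>/2 * (norm (y - x))\<^sup>2 - norm a * norm (y - x) + (norm a)\<^sup>2 / (2 * \<delta>)"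
      using dpos by (simp add: power2_eq_square field_simps)
    ultimately show ?thesis unfolding c_def \<phi>_def by linarith
  qed
  define S where "S = \<phi> ` D"
  define I where "I = Inf S"
  have SD: "S \<noteq> {}" using x0 unfolding S_def D_def by auto
  have bdd: "bdd_below S" unfolding S_def using lb by (intro bdd_belowI[of _ c]) auto
  have Ile: "I \<le> \<phi> y" if "y \<in> D" for y
    unfolding I_def S_def using cInf_lower[OF _ bdd] that S_def by auto
  have "\<exists>y\<in>D. \<phi> y < I + 1 / (real n + 1)" for n
  proof -
    have "Inf S < I + 1 / (real n + 1)" unfolding I_def by simp
    from cInf_lessD[OF SD this] show ?thesis unfolding S_def by auto
  qed
  then obtain ys where ysD: "\<And>n. ys n \<in> D" and ysl: "\<And>n. \<phi> (ys n) < I + 1 / (real n + 1)"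
    by metis
  have mid: "(1/2) *\<^sub>R p + (1/2) *\<^sub>R q \<in> D \<and>
      \<phi> ((1/2) *\<^sub>R p + (1/2) *\<^sub>R q) \<le> (\<phi> p + \<phi> q) / 2 - \<delta>/8 * (norm (p - q))\<^sup>2"
    if "p \<in> D" "q \<in> D" for p q
  proof -
    have "u ((1 - 1/2) *\<^sub>R p + (1/2) *\<^sub>R q) \<le> ereal ((1 - 1/2) * ur p + (1/2) * ur q)"
      using pcc_conv[OF pcc, of p "ur p" q "ur q" "1/2"] uD that by simp
    then have h: "u ((1/2) *\<^sub>R p + (1/2) *\<^sub>R q) \<le> ereal ((1/2) * ur p + (1/2) * ur q)" by simp
    then have inD: "(1/2) *\<^sub>R p + (1/2) *\<^sub>R q \<in> D" unfolding D_def by auto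
    have "ur ((1/2) *\<^sub>R p + (1/2) *\<^sub>R q) \<le> (1/2) * ur p + (1/2) * ur q"
      using h uD[OF inD] by simp
    then show ?thesis using inD unfolding \<phi>_def norm_mid by (simp add: field_simps)
  qed
  have close: "\<delta>/8 * (norm (ys n - ys k))\<^sup>2 \<le> (1 / (real n + 1) + 1 / (real k + 1)) / 2" for n k
  proof -
    note m = mid[OF ysD[of n] ysD[of k]]
    have "I \<le> \<phi> ((1/2) *\<^sub>R ys n + (1/2) *\<^sub>R ys k)" using Ile m by blast
    show ?thesis by (rule arith_aux[OF \<open>I \<le> _\<close> m[THEN conjunct2] ysl[of n] ysl[of k]])
  qed
  have "Cauchy ys"
  proof (rule CauchyI)
    fix e :: real assume e: "0 < e"
    obtain N where N: "inverse (real (Suc N)) < \<delta> / 8 * e\<^sup>2"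
      using reals_Archimedean[of "\<delta> * e\<^sup>2 / 8"] dpos e by auto
    have "norm (ys n - ys k) < e" if "n \<ge> N" "k \<ge> N" for n k
    proof -
      have a1: "1 / (real n + 1) \<le> inverse (real (Suc N))" using that
        by (simp add: inverse_eq_divide frac_le)
      have a2: "1 / (real k + 1) \<le> inverse (real (Suc N))" using that
        by (simp add: inverse_eq_divide frac_le)
      have "\<delta>/8 * (norm (ys n - ys k))\<^sup>2 < \<delta>/8 * e\<^sup>2"
        using close[of n k] a1 a2 N by argo
      then have "(norm (ys n - ys k))\<^sup>2 < e\<^sup>2" using dpos by simp
      then show ?thesis using e by (simp add: power_less_imp_less_base)
    qed
    then show "\<exists>M. \<forall>m\<ge>M. \<forall>n\<ge>M. norm (ys m - ys n) < e" by blast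
  qed
  then obtain y0 where y0: "ys \<longlonglongrightarrow> y0" using Cauchy_convergent_iff convergent_def by blast
  have phil: "(\<lambda>n. \<phi> (ys n)) \<longlonglongrightarrow> I"
  proof (rule tendsto_sandwich[of "\<lambda>n. I" _ _ "\<lambda>n. I + 1 / (real n + 1)"])
    show "\<forall>\<^sub>F n in sequentially. I \<le> \<phi> (ys n)" using Ile ysD by simp
    show "\<forall>\<^sub>F n in sequentially. \<phi> (ys n) \<le> I + 1 / (real n + 1)" using ysl by (simp add: less_imp_le)
    show "(\<lambda>n. I) \<longlonglongrightarrow> I" by simp
    have "(\<lambda>n. 1 / (real n + 1)) \<longlonglongrightarrow> 0"
      using LIMSEQ_inverse_real_of_nat by (simp add: inverse_eq_divide add.commute)
    then show "(\<lambda>n. I + 1 / (real n + 1)) \<longlonglongrightarrow> I" using tendsto_add[of "\<lambda>n. I" I] by fastforce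
  qed
  have tl: "(\<lambda>n. \<phi> (ys n) - \<delta>/2 * (norm (ys n - x))\<^sup>2) \<longlonglongrightarrow> I - \<delta>/2 * (norm (y0 - x))\<^sup>2"
    by (intro tendsto_intros phil y0)
  have "u y0 \<le> ereal (I - \<delta>/2 * (norm (y0 - x))\<^sup>2)"
  proof (rule pcc_closed[OF pcc _ y0 tl])
    fix n show "u (ys n) \<le> ereal (\<phi> (ys n) - \<delta>/2 * (norm (ys n - x))\<^sup>2)"
      using uD[OF ysD[of n]] unfolding \<phi>_def by simp
  qed
  then have y0D: "y0 \<in> D" unfolding D_def by auto
  have phi0: "\<phi> y0 \<le> I" using \<open>u y0 \<le> _\<close> uD[OF y0D] unfolding \<phi>_def by simp
  show ?thesis
  proof (intro exI conjI allI)
    show "u y0 \<noteq> \<infinity>" using y0D D_def by simp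
    fix w
    show "u y0 + ereal (\<delta>/2 * (norm (y0 - x))\<^sup>2) \<le> u w + ereal (\<delta>/2 * (norm (w - x))\<^sup>2)"
    proof (cases "w \<in> D")
      case True
      then show ?thesis using uD[OF True] uD[OF y0D] phi0 Ile[OF True] unfolding \<phi>_def by simp
    next
      case False
      then show ?thesis unfolding D_def by simp
    qed
  qed
qed


lemma moreau_grad:
  fixes u :: "'a::euclidean_space \<Rightarrow> ereal"
  assumes pcc: "proper_closed_convex u" and dpos: "\<delta> > 0"
  shows "moreau u \<delta> z + inner (grad (moreau u \<delta>) z) (y - z) \<le> moreau u \<delta> y"
    and "moreau u \<delta> y \<le> moreau u \<delta> z + inner (grad (moreau u \<delta>) z) (y - z) + \<delta>/2 * (norm (y - z))\<^sup>2"
proof -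
  define M where "M = moreau u \<delta>"
  have nm: "\<And>x. u x \<noteq> -\<infinity>" using pcc unfolding proper_closed_convex_def by blast
  define ur where "ur y = real_of_ereal (u y)" for y
  have uD: "u y = ereal (ur y)" if "u y \<noteq> \<infinity>" for y
    using that nm[of y] unfolding ur_def by (cases "u y") auto
  define P where "P x = (SOME y. u y \<noteq> \<infinity> \<and> (\<forall>w. u y + ereal (\<delta>/2 * (norm (y - x))\<^sup>2) \<le> u w + ereal (\<delta>/2 * (norm (w - x))\<^sup>2)))" for x
  have Pp: "u (P x) \<noteq> \<infinity> \<and> (\<forall>w. u (P x) + ereal (\<delta>/2 * (norm (P x - x))\<^sup>2) \<le> u w + ereal (\<delta>/2 * (norm (w - x))\<^sup>2))" for x
    unfolding P_def by (rule someI_ex[OF pcc_prox[OF pcc dpos]])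
  have Mval: "M x = ur (P x) + \<delta>/2 * (norm (P x - x))\<^sup>2" for x
  proof -
    have "(INF y. u y + ereal (\<delta> / 2 * (norm (y - x))\<^sup>2)) = u (P x) + ereal (\<delta>/2 * (norm (P x - x))\<^sup>2)"
    proof (rule antisym)
      show "(INF y. u y + ereal (\<delta> / 2 * (norm (y - x))\<^sup>2)) \<le> u (P x) + ereal (\<delta>/2 * (norm (P x - x))\<^sup>2)"
        by (rule INF_lower) simp
      show "u (P x) + ereal (\<delta>/2 * (norm (P x - x))\<^sup>2) \<le> (INF y. u y + ereal (\<delta> / 2 * (norm (y - x))\<^sup>2))"
        using Pp[of x] by (intro INF_greatest) auto
    qed
    then show ?thesis unfolding M_def moreau_def using uD[of "P x"] Pp[of x] by simp
  qed
  have Mle: "M x \<le> ur w + \<delta>/2 * (norm (w - x))\<^sup>2" if "u w \<noteq> \<infinity>" for x w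
  proof -
    have "u (P x) + ereal (\<delta>/2 * (norm (P x - x))\<^sup>2) \<le> u w + ereal (\<delta>/2 * (norm (w - x))\<^sup>2)"
      using Pp by blast
    then show ?thesis unfolding Mval using uD[OF that] uD[of "P x"] Pp[of x] by simp
  qed
  have Mconv: "M ((1 - t) *\<^sub>R a + t *\<^sub>R b) \<le> (1 - t) * M a + t * M b" if t: "0 \<le> t" "t \<le> 1" for t a b
  proof -
    define w where "w = (1 - t) *\<^sub>R P a + t *\<^sub>R P b"
    have "u w \<le> ereal ((1 - t) * ur (P a) + t * ur (P b))"
      unfolding w_def using pcc_conv[OF pcc _ _ t, of "P a" "ur (P a)" "P b" "ur (P b)"] uD Pp by simp
    then have wD: "u w \<noteq> \<infinity>" by auto
    then have uw: "ur w \<le> (1 - t) * ur (P a) + t * ur (P b)"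
      using uD[of w] \<open>u w \<le> _\<close> by simp
    have "w - ((1 - t) *\<^sub>R a + t *\<^sub>R b) = (1 - t) *\<^sub>R (P a - a) + t *\<^sub>R (P b - b)"
      unfolding w_def by (simp add: algebra_simps)
    then have nw: "(norm (w - ((1 - t) *\<^sub>R a + t *\<^sub>R b)))\<^sup>2 \<le> (1 - t) * (norm (P a - a))\<^sup>2 + t * (norm (P b - b))\<^sup>2"
      using norm_conv[OF t] by simp
    have "M ((1 - t) *\<^sub>R a + t *\<^sub>R b) \<le> ur w + \<delta>/2 * (norm (w - ((1 - t) *\<^sub>R a + t *\<^sub>R b)))\<^sup>2"
      by (rule Mle[OF wD])
    also have "\<dots> \<le> (1 - t) * ur (P a) + t * ur (P b) + \<delta>/2 * ((1 - t) * (norm (P a - a))\<^sup>2 + t * (norm (P b - b))\<^sup>2)"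
      using uw nw dpos by (intro add_mono mult_left_mono) auto
    also have "\<dots> = (1 - t) * M a + t * M b" unfolding Mval by (simp add: field_simps)
    finally show ?thesis .
  qed
  define p where "p x = \<delta> *\<^sub>R (x - P x)" for x
  have Mup: "M (x + h) \<le> M x + inner (p x) h + \<delta>/2 * (norm h)\<^sup>2" for x h
  proof -
    have a: "M (x + h) \<le> ur (P x) + \<delta>/2 * (norm (P x - (x + h)))\<^sup>2" by (rule Mle[OF Pp[THEN conjunct1]])
    have b: "(norm (P x - (x + h)))\<^sup>2 = (norm (P x - x))\<^sup>2 - 2 * inner (P x - x) h + (norm h)\<^sup>2"
      unfolding power2_norm_eq_inner
      by (simp add: inner_add_left inner_add_right inner_diff_left inner_diff_right inner_commute[of h "P x"] inner_commute[of h x] algebra_simps)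
    have c: "inner (p x) h = - (\<delta> * inner (P x - x) h)"
      unfolding p_def by (simp add: inner_diff_left algebra_simps)
    have d: "\<delta>/2 * (norm (P x - (x + h)))\<^sup>2 = \<delta>/2 * (norm (P x - x))\<^sup>2 - \<delta> * inner (P x - x) h + \<delta>/2 * (norm h)\<^sup>2"
      unfolding b by argo
    show ?thesis using a d c Mval[of x] by linarith
  qed
  have Mlow: "M x + inner (p x) h - \<delta>/2 * (norm h)\<^sup>2 \<le> M (x + h)" for x h
  proof -
    have "M ((1 - 1/2) *\<^sub>R (x + h) + (1/2) *\<^sub>R (x - h)) \<le> (1 - 1/2) * M (x + h) + (1/2) * M (x - h)"
      by (rule Mconv) auto
    moreover have "(1 - 1/2) *\<^sub>R (x + h) + (1/2) *\<^sub>R (x - h) = x"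
    proof -
      have "(1 - 1/2::real) *\<^sub>R (x + h) + (1/2::real) *\<^sub>R (x - h) = ((1/2::real) + 1/2) *\<^sub>R x"
        by (simp only: scaleR_add_right scaleR_diff_right scaleR_add_left) simp
      then show ?thesis by simp
    qed
    ultimately have e1: "M x \<le> (M (x + h) + M (x - h)) / 2" by simp
    have e2: "M (x + (- h)) \<le> M x + inner (p x) (- h) + \<delta>/2 * (norm (- h))\<^sup>2" by (rule Mup)
    show ?thesis using e1 e2 by simp
  qed
  have der: "GDERIV M x :> p x" for x
    unfolding gderiv_def has_derivative_at_alt
  proof (intro conjI allI impI)
    show "bounded_linear (\<lambda>h. inner h (p x))" by (rule bounded_linear_inner_left)
    fix e :: real assume e: "0 < e"
    show "\<exists>d>0. \<forall>y. norm (y - x) < d \<longrightarrow> norm (M y - M x - inner (y - x) (p x)) \<le> e * norm (y - x)"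
    proof (intro exI[of _ "2 * e / \<delta>"] conjI allI impI)
      show "0 < 2 * e / \<delta>" using e dpos by simp
      fix y assume y: "norm (y - x) < 2 * e / \<delta>"
      define h where "h = y - x"
      have yx: "y = x + h" unfolding h_def by simp
      have b: "\<bar>M y - M x - inner h (p x)\<bar> \<le> \<delta>/2 * (norm h)\<^sup>2"
      proof -
        have l1: "M y - M x - inner h (p x) \<le> \<delta>/2 * (norm h)\<^sup>2"
          using Mup[of x h] unfolding yx by (simp add: inner_commute)
        have l2: "- (M y - M x - inner h (p x)) \<le> \<delta>/2 * (norm h)\<^sup>2"
          using Mlow[of x h] unfolding yx by (simp add: inner_commute)
        show ?thesis using l1 l2 by (simp only: abs_le_iff)
      qed
      have "\<delta>/2 * (norm h)\<^sup>2 \<le> e * norm h"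
      proof -
        have "\<delta>/2 * norm h \<le> e" using y dpos unfolding h_def by (simp add: field_simps)
        then have "(\<delta>/2 * norm h) * norm h \<le> e * norm h" by (rule mult_right_mono) simp
        then show ?thesis by (simp add: power2_eq_square mult.assoc)
      qed
      then show "norm (M y - M x - inner (y - x) (p x)) \<le> e * norm (y - x)"
        using b unfolding h_def by simp
    qed
  qed
  have gradp: "grad M x = p x" for x
  proof -
    have gd: "GDERIV M x :> grad M x" unfolding grad_def by (rule someI[of _ "p x"]) (rule der)
    from has_derivative_unique[OF gd[unfolded gderiv_def] der[of x, unfolded gderiv_def]]
    have "(\<lambda>h. inner h (grad M x)) = (\<lambda>h. inner h (p x))" .
    then have "inner (grad M x - p x) (grad M x) = inner (grad M x - p x) (p x)" by metis
    then have "inner (grad M x - p x) (grad M x - p x) = 0" by (simp add: inner_diff_right)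
    then show ?thesis by simp
  qed
  show "M y \<le> M z + inner (grad M z) (y - z) + \<delta>/2 * (norm (y - z))\<^sup>2"
    using Mup[of z "y - z"] gradp by simp
  show "M z + inner (grad M z) (y - z) \<le> M y"
  proof -
    define h where "h = y - z"
    define D where "D = M y - M z - inner (p z) h"
    have ev: "\<forall>\<^sub>F t in at_right 0. - (\<delta>/2 * (norm h)\<^sup>2) * t \<le> D"
      unfolding eventually_at_right_field
    proof (intro exI[of _ 1] conjI allI impI)
      show "(0::real) < 1" by simp
      fix t :: real assume t: "0 < t" "t < 1"
      have c: "M ((1 - t) *\<^sub>R z + t *\<^sub>R y) \<le> (1 - t) * M z + t * M y" using Mconv t by simp
      have eq: "(1 - t) *\<^sub>R z + t *\<^sub>R y = z + t *\<^sub>R h" unfolding h_def by (simp add: algebra_simps)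
      have l: "M z + inner (p z) (t *\<^sub>R h) - \<delta>/2 * (norm (t *\<^sub>R h))\<^sup>2 \<le> M (z + t *\<^sub>R h)" by (rule Mlow)
      have "t * (- (\<delta>/2 * (norm h)\<^sup>2) * t) \<le> t * D"
        using c l unfolding eq D_def
        by (simp add: power_mult_distrib algebra_simps power2_eq_square)
      then show "- (\<delta>/2 * (norm h)\<^sup>2) * t \<le> D" using t(1) by (rule mult_left_le_imp_le)
    qed
    have lim: "((\<lambda>t. - (\<delta>/2 * (norm h)\<^sup>2) * t) \<longlongrightarrow> 0) (at_right 0)"
      by (rule tendsto_eq_intros) (auto intro: tendsto_ident_at)
    have "0 \<le> D" by (rule tendsto_le[OF _ tendsto_const lim ev]) simp
    then show ?thesis unfolding D_def h_def using gradp by simp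
  qed
qed


lemma ereal_add_le_iff: "ereal a + b \<le> ereal t \<longleftrightarrow> b \<le> ereal (t - a)"
  by (cases b) auto

lemma sum_pcc:
  fixes F :: "'a::euclidean_space \<Rightarrow> real" and r :: "'a \<Rightarrow> ereal"
  assumes Fconv: "\<And>x y t. 0 \<le> t \<Longrightarrow> t \<le> 1 \<Longrightarrow> F ((1 - t) *\<^sub>R x + t *\<^sub>R y) \<le> (1 - t) * F x + t * F y"
    and Fcont: "\<And>x. isCont F x"
    and r: "proper_closed_convex r"
  shows "proper_closed_convex (\<lambda>y. ereal (F y) + r y)"
proof -
  have nm: "\<And>x. r x \<noteq> -\<infinity>" and ex: "\<exists>x. r x \<noteq> \<infinity>" and cl: "closed (epi r)"
    using r unfolding proper_closed_convex_def by blast+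
  have memu: "(y, t) \<in> epi (\<lambda>y. ereal (F y) + r y) \<longleftrightarrow> (y, t - F y) \<in> epi r" for y t
    by (simp add: epi_def ereal_add_le_iff)
  have A: "\<forall>x. ereal (F x) + r x \<noteq> -\<infinity>" using nm by simp
  have B: "\<exists>x. ereal (F x) + r x \<noteq> \<infinity>" using ex by auto
  have C: "convex (epi (\<lambda>y. ereal (F y) + r y))"
    unfolding convex_alt
  proof (intro ballI allI impI)
    fix p q :: "'a \<times> real" and s :: real
    assume p: "p \<in> epi (\<lambda>y. ereal (F y) + r y)" and q: "q \<in> epi (\<lambda>y. ereal (F y) + r y)" and s: "0 \<le> s \<and> s \<le> 1"
    obtain y1 t1 where p1: "p = (y1, t1)" by (cases p)
    obtain y2 t2 where q1: "q = (y2, t2)" by (cases q)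
    have r1: "r y1 \<le> ereal (t1 - F y1)" using p p1 memu by (simp add: epi_def)
    have r2: "r y2 \<le> ereal (t2 - F y2)" using q q1 memu by (simp add: epi_def)
    have "r ((1 - s) *\<^sub>R y1 + s *\<^sub>R y2) \<le> ereal ((1 - s) * (t1 - F y1) + s * (t2 - F y2))"
      using pcc_conv[OF r r1 r2] s by blast
    moreover have "(1 - s) * (t1 - F y1) + s * (t2 - F y2) \<le> ((1 - s) * t1 + s * t2) - F ((1 - s) *\<^sub>R y1 + s *\<^sub>R y2)"
      using Fconv[of s y1 y2] s by (simp add: algebra_simps)
    ultimately have "r ((1 - s) *\<^sub>R y1 + s *\<^sub>R y2) \<le> ereal (((1 - s) * t1 + s * t2) - F ((1 - s) *\<^sub>R y1 + s *\<^sub>R y2))"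
      using order_trans ereal_less_eq(3) by blast
    then show "(1 - s) *\<^sub>R p + s *\<^sub>R q \<in> epi (\<lambda>y. ereal (F y) + r y)"
      unfolding p1 q1 by (simp add: epi_def ereal_add_le_iff)
  qed
  have D: "closed (epi (\<lambda>y. ereal (F y) + r y))"
    unfolding closed_sequential_limits
  proof (intro allI impI, elim conjE)
    fix X :: "nat \<Rightarrow> 'a \<times> real" and l
    assume X: "\<forall>n. X n \<in> epi (\<lambda>y. ereal (F y) + r y)" and l: "X \<longlonglongrightarrow> l"
    have Xr: "\<forall>n. (fst (X n), snd (X n) - F (fst (X n))) \<in> epi r"
      using X memu by (metis prod.collapse)
    have l1: "(\<lambda>n. fst (X n)) \<longlonglongrightarrow> fst l" using l by (rule tendsto_fst)
    have l2: "(\<lambda>n. snd (X n)) \<longlonglongrightarrow> snd l" using l by (rule tendsto_snd)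
    have l3: "(\<lambda>n. F (fst (X n))) \<longlonglongrightarrow> F (fst l)" using isCont_tendsto_compose[OF Fcont l1] .
    have tl: "(\<lambda>n. (fst (X n), snd (X n) - F (fst (X n)))) \<longlonglongrightarrow> (fst l, snd l - F (fst l))"
      by (intro tendsto_Pair tendsto_diff l1 l2 l3)
    have Y: "\<forall>x l. (\<forall>n. x n \<in> epi r) \<and> x \<longlonglongrightarrow> l \<longrightarrow> l \<in> epi r"
      using cl by (simp add: closed_sequential_limits)
    have "(fst l, snd l - F (fst l)) \<in> epi r" using Y[rule_format, OF conjI[OF Xr tl]] .
    then show "l \<in> epi (\<lambda>y. ereal (F y) + r y)" using memu by (metis prod.collapse)
  qed
  show ?thesis unfolding proper_closed_convex_def using A B C D by blast
qed


lemma alg_main: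
  fixes M :: "'a::euclidean_space \<Rightarrow> real" and G :: "'a \<Rightarrow> 'a"
    and xt zt e v :: "nat \<Rightarrow> nat \<Rightarrow> 'a"
    and \<alpha> \<zeta> :: "nat \<Rightarrow> real" and \<psi>s \<epsilon> :: "nat \<Rightarrow> nat \<Rightarrow> real"
  assumes delta_pos: "\<delta> > 0" and muM: "\<mu>M \<ge> 0"
    and G1: "\<And>y z. M z + inner (G z) (y - z) \<le> M y"
    and G2: "\<And>y z. M y \<le> M z + inner (G z) (y - z) + \<delta>/2 * (norm (y - z))\<^sup>2"
    and alpha_range: "\<forall>k. 0 < \<alpha> k \<and> \<alpha> k < 1"
    and alpha_rec: "\<forall>k. (\<alpha> (Suc k))\<^sup>2 = (1 - \<alpha> (Suc k)) * (\<alpha> k)\<^sup>2 + \<alpha> (Suc k) * \<mu>M / \<delta>"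
    and zeta0_def: "\<zeta> 0 = (\<delta> * (\<alpha> 0)\<^sup>2 - \<alpha> 0 * \<mu>M) / (1 - \<alpha> 0)"
    and zeta0_pos: "\<zeta> 0 > 0"
    and zeta_rec: "\<forall>k. \<zeta> (Suc k) = (1 - \<alpha> k) * \<zeta> k + \<alpha> k * \<mu>M"
    and zt0: "\<forall>i. zt i 0 = xt i 0"
    and zt_rec: "\<forall>i k. zt i (Suc k) = xt i (Suc k)
        + (\<alpha> k * (1 - \<alpha> k) / ((\<alpha> k)\<^sup>2 + \<alpha> (Suc k))) *\<^sub>R (xt i (Suc k) - xt i k)"
    and e_def: "\<forall>i k. e i k = \<delta> *\<^sub>R (zt i k - xt i (Suc k)) - G (zt i k)"
    and v0: "\<forall>i. v i 0 = xt i 0"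
    and v_rec: "\<forall>i k. v i (Suc k) =
        ((1 - \<alpha> k) * \<zeta> k / \<zeta> (Suc k)) *\<^sub>R v i k
        + (\<alpha> k * \<mu>M / \<zeta> (Suc k)) *\<^sub>R zt i k
        - (\<alpha> k / \<zeta> (Suc k)) *\<^sub>R (G (zt i k) + e i k)"
    and psi0: "\<forall>i. \<psi>s i 0 = M (xt i 0)"
    and psi_rec: "\<forall>i k. \<psi>s i (Suc k) =
        (1 - \<alpha> k) * \<psi>s i k + \<alpha> k * M (zt i k)
        - (\<alpha> k)\<^sup>2 / (2 * \<zeta> (Suc k)) * (norm (G (zt i k) + e i k))\<^sup>2
        + \<alpha> k * (1 - \<alpha> k) * \<zeta> k / \<zeta> (Suc k)
          * (inner (G (zt i k) + e i k) (v i k - zt i k)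
             + \<mu>M / 2 * (norm (zt i k - v i k))\<^sup>2)"
    and eps0: "\<forall>i. \<epsilon> i 0 = 0"
    and eps_rec: "\<forall>i k. \<epsilon> i (Suc k) =
        (1 - \<alpha> k) * \<epsilon> i k + (1 - \<alpha> k) * inner (e i k) (xt i k - zt i k)
        + inner (e i k + G (zt i k)) ((1 / \<delta>) *\<^sub>R e i k)"
  shows "M (xt i k) \<le> \<psi>s i k + \<epsilon> i k"
proof -
  have Z1: "\<zeta> (Suc k) = \<delta> * (\<alpha> k)\<^sup>2" for k
  proof (induction k)
    case 0
    have "1 - \<alpha> 0 \<noteq> 0" using alpha_range by (metis less_irrefl right_minus_eq)
    then have "\<zeta> 0 * (1 - \<alpha> 0) = \<delta> * (\<alpha> 0)\<^sup>2 - \<alpha> 0 * \<mu>M" using zeta0_def by simp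
    moreover have "\<zeta> (Suc 0) = (1 - \<alpha> 0) * \<zeta> 0 + \<alpha> 0 * \<mu>M" using zeta_rec by blast
    ultimately show ?case by (simp add: algebra_simps)
  next
    case (Suc k)
    have "(\<alpha> (Suc k))\<^sup>2 * \<delta> = ((1 - \<alpha> (Suc k)) * (\<alpha> k)\<^sup>2 + \<alpha> (Suc k) * \<mu>M / \<delta>) * \<delta>"
      using alpha_rec by simp
    also have "\<dots> = (1 - \<alpha> (Suc k)) * (\<delta> * (\<alpha> k)\<^sup>2) + \<alpha> (Suc k) * \<mu>M"
      using delta_pos by (simp add: ring_distribs)
    finally have "(\<alpha> (Suc k))\<^sup>2 * \<delta> = (1 - \<alpha> (Suc k)) * (\<delta> * (\<alpha> k)\<^sup>2) + \<alpha> (Suc k) * \<mu>M" .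
    then show ?case using zeta_rec[rule_format, of "Suc k"] Suc by (simp add: algebra_simps)
  qed
  have Zpos: "\<zeta> k > 0" for k
  proof (cases k)
    case (Suc n) then show ?thesis using Z1 delta_pos alpha_range[rule_format, of n] by simp
  qed (use zeta0_pos in simp)
  have Gd: "G (zt i k) + e i k = \<delta> *\<^sub>R (zt i k - xt i (Suc k))" for k
    using e_def by simp
  have Inv: "\<zeta> (Suc k) *\<^sub>R (xt i k - zt i k) + (\<alpha> k * \<zeta> k) *\<^sub>R (v i k - zt i k) = 0" for k
  proof (induction k)
    case 0
    then show ?case using zt0 v0 by simp
  next
    case (Suc k)
    define a where "a = \<alpha> k"
    define a' where "a' = \<alpha> (Suc k)"
    define c where "c = a * (1 - a) / (a\<^sup>2 + a')"
    define d where "d = xt i (Suc k) - xt i k"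
    have apos: "a > 0" "a < 1" "a' > 0" using alpha_range a_def a'_def by auto
    have V: "v i (Suc k) = xt i k + (1 / a) *\<^sub>R d"
    proof -
      have "inner (v i (Suc k)) w = inner (xt i k + (1 / a) *\<^sub>R d) w" for w
      proof -
        have I: "\<zeta> (Suc k) * (inner (xt i k) w - inner (zt i k) w) + (a * \<zeta> k) * (inner (v i k) w - inner (zt i k) w) = 0"
          using arg_cong[OF Suc, of "\<lambda>y. inner y w"] a_def
          by (simp add: inner_add_left inner_diff_left)
        have zr: "\<zeta> (Suc k) = (1 - a) * \<zeta> k + a * \<mu>M" using zeta_rec a_def by simp
        have z1: "\<zeta> (Suc k) = \<delta> * a\<^sup>2" using Z1 a_def by simp
        have vv: "inner (v i k) w = inner (zt i k) w - \<zeta> (Suc k) * (inner (xt i k) w - inner (zt i k) w) / (a * \<zeta> k)"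
          using I apos Zpos[of k] by (simp add: field_simps)
        have mu: "\<mu>M = (\<zeta> (Suc k) - (1 - a) * \<zeta> k) / a" using zr apos by (simp add: field_simps)
        show ?thesis
          using apos Zpos[of k] Zpos[of "Suc k"] delta_pos
          apply (simp add: v_rec Gd inner_add_left inner_diff_left d_def flip: a_def)
          apply (simp add: vv mu)
          apply (simp add: z1 field_simps power2_eq_square)
          done
      qed
      then show ?thesis by (metis right_minus_eq inner_diff_left inner_eq_zero_iff)
    qed
    have zz: "zt i (Suc k) = xt i (Suc k) + c *\<^sub>R d"
      using zt_rec c_def d_def a_def a'_def by simp
    have A: "xt i (Suc k) - zt i (Suc k) = (- c) *\<^sub>R d" using zz by simp
    have B: "v i (Suc k) - zt i (Suc k) = (1 / a - 1 - c) *\<^sub>R d"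
    proof -
      have xd: "xt i (Suc k) = xt i k + d" using d_def by simp
      show ?thesis unfolding V zz xd by (simp add: algebra_simps)
    qed
    have cc: "c * (a\<^sup>2 + a') = a * (1 - a)"
      using apos add_pos_pos[OF apos(3) mult_pos_pos[OF apos(1) apos(1)]] unfolding c_def
      by (simp add: power2_eq_square)
    have coef: "\<zeta> (Suc (Suc k)) * (- c) + (a' * \<zeta> (Suc k)) * (1 / a - 1 - c) = 0"
    proof -
      have "\<zeta> (Suc (Suc k)) * (- c) + (a' * \<zeta> (Suc k)) * (1 / a - 1 - c)
          = \<delta> * a' * (a * (1 - a) - c * (a\<^sup>2 + a'))"
        using apos unfolding Z1 a_def[symmetric] a'_def[symmetric]
        by (simp add: field_simps power2_eq_square)
      then show ?thesis using cc by simp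
    qed
    have "\<zeta> (Suc (Suc k)) *\<^sub>R (xt i (Suc k) - zt i (Suc k)) + (\<alpha> (Suc k) * \<zeta> (Suc k)) *\<^sub>R (v i (Suc k) - zt i (Suc k))
       = (\<zeta> (Suc (Suc k)) * (- c) + (a' * \<zeta> (Suc k)) * (1 / a - 1 - c)) *\<^sub>R d"
      unfolding A B a'_def by (simp only: scaleR_scaleR scaleR_add_left)
    then show ?case using coef by simp
  qed
  show ?thesis
  proof (induction k)
    case 0
    then show ?case using psi0 eps0 by simp
  next
    case (Suc k)
    define a where "a = \<alpha> k"
    define x where "x = xt i k"
    define x' where "x' = xt i (Suc k)"
    define z where "z = zt i k"
    define g where "g = G z"
    define E where "E = e i k"
    define Gt where "Gt = g + E"
    have apos: "a > 0" "a < 1" using alpha_range a_def by auto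
    have Gt: "Gt = \<delta> *\<^sub>R (z - x')" using Gd Gt_def g_def E_def z_def x'_def by simp
    have xz0: "(1 / \<delta>) *\<^sub>R Gt = z - x'" using Gt delta_pos by simp
    have xz: "x' - z = (- 1 / \<delta>) *\<^sub>R Gt"
    proof -
      have "x' - z = - ((1 / \<delta>) *\<^sub>R Gt)" unfolding xz0 by simp
      then show ?thesis by simp
    qed
    have z1: "\<zeta> (Suc k) = \<delta> * a\<^sup>2" using Z1 a_def by simp
    have Iv: "\<zeta> (Suc k) * inner Gt (x - z) + (a * \<zeta> k) * inner Gt (v i k - z) = 0"
      using arg_cong[OF Inv[of k], of "inner Gt"] a_def x_def z_def
      by (simp add: inner_add_right)
    have g1: "M z + inner g (x - z) \<le> M x" using G1 g_def by simp
    have g2: "M x' \<le> M z + inner g (x' - z) + \<delta>/2 * (norm (x' - z))\<^sup>2" using G2 g_def by simp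
    have n1: "inner g (x' - z) = - (inner Gt Gt - inner Gt E) / \<delta>"
      unfolding xz Gt_def using delta_pos by (simp add: inner_add_left inner_add_right inner_diff_right inner_minus_right inner_scaleR_right inner_commute field_simps)
    have n2: "(norm (x' - z))\<^sup>2 = inner Gt Gt / \<delta>\<^sup>2"
      unfolding xz by (simp add: power_mult_distrib power_divide dot_square_norm)
    have mterm: "0 \<le> a * (1 - a) * \<zeta> k / \<zeta> (Suc k) * (\<mu>M / 2 * (norm (z - v i k))\<^sup>2)"
      using apos Zpos[of k] Zpos[of "Suc k"] muM by simp
    have ps: "\<psi>s i (Suc k) = (1 - a) * \<psi>s i k + a * M z - inner Gt Gt / (2 * \<delta>)
       + a * (1 - a) * \<zeta> k / \<zeta> (Suc k) * inner Gt (v i k - z)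
       + a * (1 - a) * \<zeta> k / \<zeta> (Suc k) * (\<mu>M / 2 * (norm (z - v i k))\<^sup>2)"
    proof -
      have q: "a\<^sup>2 / (2 * \<zeta> (Suc k)) * (norm Gt)\<^sup>2 = inner Gt Gt / (2 * \<delta>)"
        unfolding z1 using apos delta_pos by (simp add: dot_square_norm)
      have "\<psi>s i (Suc k) = (1 - a) * \<psi>s i k + a * M z - a\<^sup>2 / (2 * \<zeta> (Suc k)) * (norm Gt)\<^sup>2
        + a * (1 - a) * \<zeta> k / \<zeta> (Suc k) * (inner Gt (v i k - z) + \<mu>M / 2 * (norm (z - v i k))\<^sup>2)"
        using psi_rec by (simp add: a_def z_def g_def E_def Gt_def)
      then show ?thesis unfolding q by (simp add: distrib_left)
    qed
    have es: "\<epsilon> i (Suc k) = (1 - a) * \<epsilon> i k + (1 - a) * inner E (x - z) + inner Gt E / \<delta>"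
      using eps_rec by (simp add: a_def x_def z_def E_def Gt_def g_def add.commute)
    have gx: "inner g (x - z) = inner Gt (x - z) - inner E (x - z)"
      unfolding Gt_def by (simp add: inner_add_left)
    have Iv2: "(1 - a) * inner Gt (x - z) + a * (1 - a) * \<zeta> k / \<zeta> (Suc k) * inner Gt (v i k - z) = 0"
    proof -
      have "(1 - a) / \<zeta> (Suc k) * (\<zeta> (Suc k) * inner Gt (x - z) + (a * \<zeta> k) * inner Gt (v i k - z)) = 0"
        using Iv by simp
      then show ?thesis using Zpos[of "Suc k"] by (simp add: field_simps)
    qed
    have IH: "M x \<le> \<psi>s i k + \<epsilon> i k" using Suc x_def by simp
    have h1: "(1 - a) * M x \<le> (1 - a) * (\<psi>s i k + \<epsilon> i k)"
      using IH apos by (simp add: mult_left_mono)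
    have h2: "M x' \<le> M z - inner Gt Gt / (2 * \<delta>) + inner Gt E / \<delta>"
      using g2 n1 n2 delta_pos by (simp add: field_simps power2_eq_square)
    show ?case
    proof -
      define P where "P = a * (1 - a) * \<zeta> k / \<zeta> (Suc k) * inner Gt (v i k - z)"
      define Q where "Q = a * (1 - a) * \<zeta> k / \<zeta> (Suc k) * (\<mu>M / 2 * (norm (z - v i k))\<^sup>2)"
      have g1': "(1 - a) * M z + (1 - a) * inner g (x - z) \<le> (1 - a) * M x"
        using g1 apos by (simp add: mult_left_mono flip: distrib_left)
      have h1': "(1 - a) * M x \<le> (1 - a) * \<psi>s i k + (1 - a) * \<epsilon> i k"
        using h1 by (simp add: distrib_left)
      have gx': "(1 - a) * inner g (x - z) = (1 - a) * inner Gt (x - z) - (1 - a) * inner E (x - z)"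
        using gx by (simp add: right_diff_distrib)
      have Iv3: "(1 - a) * inner Gt (x - z) + P = 0" using Iv2 P_def by simp
      have Mz: "(1 - a) * M z = M z - a * M z" by (simp add: left_diff_distrib)
      have Q0: "0 \<le> Q" using mterm Q_def by simp
      have ps': "\<psi>s i (Suc k) = (1 - a) * \<psi>s i k + a * M z - inner Gt Gt / (2 * \<delta>) + P + Q"
        using ps P_def Q_def by simp
      show ?thesis unfolding x'_def[symmetric] ps' es
        using h1' h2 g1' gx' Iv3 Mz Q0 by linarith
    qed
  qed
qed

theorem lemma10:
  fixes fi :: "nat \<Rightarrow> 'a::euclidean_space \<Rightarrow> real"
    and r :: "'a \<Rightarrow> ereal"
    and m :: nat and \<mu> L \<delta> :: real
    and M :: "'a \<Rightarrow> real" and \<mu>M :: real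
    and xt zt e v :: "nat \<Rightarrow> nat \<Rightarrow> 'a"   (* indexed: i k *)
    and \<alpha> \<zeta> :: "nat \<Rightarrow> real"
    and \<psi>s \<epsilon> :: "nat \<Rightarrow> nat \<Rightarrow> real"  (* indexed: i k *)
  assumes m_pos: "m \<ge> 1"
    and fi_C1: "\<forall>i<m. C1 (fi i)"
    and fi_convex: "\<forall>i<m. convex_on UNIV (fi i)"
    and mu_nonneg: "\<mu> \<ge> 0"
    and f_sc: "strongly_convex \<mu> (\<lambda>x. (1 / real m) * (\<Sum>i<m. fi i x))"
    and f_smooth: "L_smooth L (\<lambda>x. (1 / real m) * (\<Sum>i<m. fi i x))"
    and r_pcc: "proper_closed_convex r"
    and delta_pos: "\<delta> > 0"
    and M_def: "M = moreau (\<lambda>y. ereal ((1 / real m) * (\<Sum>i<m. fi i y)) + r y) \<delta>"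
    and muM_def: "\<mu>M = \<delta> * \<mu> / (\<delta> + \<mu>)"
    and alpha_range: "\<forall>k. 0 < \<alpha> k \<and> \<alpha> k < 1"
    and alpha_rec: "\<forall>k. (\<alpha> (Suc k))\<^sup>2 = (1 - \<alpha> (Suc k)) * (\<alpha> k)\<^sup>2 + \<alpha> (Suc k) * \<mu>M / \<delta>"
    and zeta0_def: "\<zeta> 0 = (\<delta> * (\<alpha> 0)\<^sup>2 - \<alpha> 0 * \<mu>M) / (1 - \<alpha> 0)"
    and zeta0_pos: "\<zeta> 0 > 0"
    and zeta_rec: "\<forall>k. \<zeta> (Suc k) = (1 - \<alpha> k) * \<zeta> k + \<alpha> k * \<mu>M"
    and zt0: "\<forall>i. zt i 0 = xt i 0"
    and zt_rec: "\<forall>i k. zt i (Suc k) = xt i (Suc k)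
        + (\<alpha> k * (1 - \<alpha> k) / ((\<alpha> k)\<^sup>2 + \<alpha> (Suc k))) *\<^sub>R (xt i (Suc k) - xt i k)"
    and e_def: "\<forall>i k. e i k = \<delta> *\<^sub>R (zt i k - xt i (Suc k)) - grad M (zt i k)"
    and v0: "\<forall>i. v i 0 = xt i 0"
    and v_rec: "\<forall>i k. v i (Suc k) =
        ((1 - \<alpha> k) * \<zeta> k / \<zeta> (Suc k)) *\<^sub>R v i k
        + (\<alpha> k * \<mu>M / \<zeta> (Suc k)) *\<^sub>R zt i k
        - (\<alpha> k / \<zeta> (Suc k)) *\<^sub>R (grad M (zt i k) + e i k)"
    and psi0: "\<forall>i. \<psi>s i 0 = M (xt i 0)"
    and psi_rec: "\<forall>i k. \<psi>s i (Suc k) =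
        (1 - \<alpha> k) * \<psi>s i k + \<alpha> k * M (zt i k)
        - (\<alpha> k)\<^sup>2 / (2 * \<zeta> (Suc k)) * (norm (grad M (zt i k) + e i k))\<^sup>2
        + \<alpha> k * (1 - \<alpha> k) * \<zeta> k / \<zeta> (Suc k)
          * (inner (grad M (zt i k) + e i k) (v i k - zt i k)
             + \<mu>M / 2 * (norm (zt i k - v i k))\<^sup>2)"
    and eps0: "\<forall>i. \<epsilon> i 0 = 0"
    and eps_rec: "\<forall>i k. \<epsilon> i (Suc k) =
        (1 - \<alpha> k) * \<epsilon> i k + (1 - \<alpha> k) * inner (e i k) (xt i k - zt i k)
        + inner (e i k + grad M (zt i k)) ((1 / \<delta>) *\<^sub>R e i k)"
  shows "\<forall>k. \<forall>i<m. M (xt i k) \<le> \<psi>s i k + \<epsilon> i k"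
proof -
  define F where "F = (\<lambda>x. (1 / real m) * (\<Sum>i<m. fi i x))"
  have Fconv: "F ((1 - t) *\<^sub>R x + t *\<^sub>R y) \<le> (1 - t) * F x + t * F y" if "0 \<le> t" "t \<le> 1" for x y t
  proof -
    have "F ((1 - t) *\<^sub>R x + t *\<^sub>R y) \<le> (1 - t) * F x + t * F y - \<mu> / 2 * t * (1 - t) * (norm (x - y))\<^sup>2"
      using f_sc that unfolding strongly_convex_def F_def by blast
    moreover have "0 \<le> \<mu> / 2 * t * (1 - t) * (norm (x - y))\<^sup>2" using mu_nonneg that by simp
    ultimately show ?thesis by linarith
  qed
  have Fcont: "isCont F x" for x
  proof -
    have "F differentiable (at x)" using f_smooth unfolding L_smooth_def F_def by blast
    then show ?thesis by (rule differentiable_imp_continuous_within)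
  qed
  have pcc: "proper_closed_convex (\<lambda>y. ereal (F y) + r y)"
    by (rule sum_pcc[OF Fconv Fcont r_pcc])
  have Mm: "M = moreau (\<lambda>y. ereal (F y) + r y) \<delta>" using M_def unfolding F_def by simp
  have G1: "\<And>y z. M z + inner (grad M z) (y - z) \<le> M y"
    unfolding Mm by (rule moreau_grad(1)[OF pcc delta_pos])
  have G2: "\<And>y z. M y \<le> M z + inner (grad M z) (y - z) + \<delta>/2 * (norm (y - z))\<^sup>2"
    unfolding Mm by (rule moreau_grad(2)[OF pcc delta_pos])
  have muM: "\<mu>M \<ge> 0" using muM_def mu_nonneg delta_pos by simp
  note A = alg_main[OF delta_pos muM G1 G2 alpha_range alpha_rec zeta0_def zeta0_pos zeta_rec zt0 zt_rec
      e_def v0 v_rec psi0 psi_rec eps0 eps_rec]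
  show ?thesis using A by blast
qed

end
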